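(* Let $q$ be a prime power, $n$ a positive integer with $\gcd(q,n)=1$, $s\in\mathbb{Z}_n^*$, $t\in\mathbb{Z}_n$ with $qt\equiv t\pmod n$, $s^{-1}$ a positive integer with $ss^{-1}\equiv1\pmod n$, and $P\subseteq\mathbb{Z}_n$ a $\mu_q$-invariant subset. Then $$f_{\rho_{s,t}(P)}(X)=\gcd\big(f_P(\theta^{-t}X^{s^{-1}}),\,X^n-1\big)=\gcd\big(\varphi_{s,t}(f_P(X)),\,X^n-1\big),$$ where $\gcd$ denotes the monic greatest common divisor in $\mathbb{F}_q[X]$.
   Context: Fix a primitive $n$-th root of unity $\theta$ in an extension of $\mathbb{F}_q$. $\mu_q:\mathbb{Z}_n\to\mathbb{Z}_n$, $i\mapsto qi\bmod n$; $P$ is $\mu_q$-invariant if $\mu_q(P)=P$. For such $P$, $f_P(X)=\prod_{i\in P}(X-\theta^i)\in\mathbb{F}_q[X]$. $\rho_{s,t}:\mathbb{Z}_n\to\mathbb{Z}_n$, $i\mapsto s(i+t)\bmod n$. $\varphi_{s,t}(a(X))$ is the unique polynomial of degree $<n$ congruent to $a(\theta^{-t}X^{s^{-1}})$ modulo $X^n-1$ (note $\theta^{-t}\in\mathbb{F}_q$). *)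

theory Defs
  imports "HOL-Computational_Algebra.Polynomial" "HOL-Computational_Algebra.Polynomial_Factorial"
    "HOL-Number_Theory.Cong"
begin

text \<open>The base field F_q is a finite field type 'k (q = CARD('k)); the extension field
  containing theta is a field type 'e, related to 'k by a ring embedding emb.  A polynomial over 'e with all coefficients
  in the image of emb is pulled back to 'k poly.\<close>

definition pullback_poly :: "('k::field \<Rightarrow> 'e::field) \<Rightarrow> 'e poly \<Rightarrow> 'k poly" where
  "pullback_poly emb p = (THE g. map_poly emb g = p)"

definition pullback_elem :: "('k::field \<Rightarrow> 'e::field) \<Rightarrow> 'e \<Rightarrow> 'k" where
  "pullback_elem emb x = (THE c. emb c = x)"

definition mu :: "nat \<Rightarrow> nat \<Rightarrow> nat \<Rightarrow> nat" where
  "mu q n i = (q * i) mod n"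

definition mu_invariant :: "nat \<Rightarrow> nat \<Rightarrow> nat set \<Rightarrow> bool" where
  "mu_invariant q n P \<longleftrightarrow> P \<subseteq> {..<n} \<and> mu q n ` P = P"

definition rho :: "nat \<Rightarrow> nat \<Rightarrow> nat \<Rightarrow> nat \<Rightarrow> nat" where
  "rho n s t i = (s * (i + t)) mod n"

definition fP :: "('k::field \<Rightarrow> 'e::field) \<Rightarrow> 'e \<Rightarrow> nat set \<Rightarrow> 'k poly" where
  "fP emb \<theta> P = pullback_poly emb (\<Prod>i\<in>P. [:- (\<theta> ^ i), 1:])"

definition subst_poly :: "('k::field \<Rightarrow> 'e::field) \<Rightarrow> 'e \<Rightarrow> nat \<Rightarrow> nat \<Rightarrow> 'k poly \<Rightarrow> 'k poly" where
  "subst_poly emb \<theta> t sinv a = pcompose a (monom (pullback_elem emb (inverse \<theta> ^ t)) sinv)"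

text \<open>varphi_{s,t}(a): the unique polynomial of degree < n congruent to
  a(theta^{-t} X^{s^{-1}}) modulo X^n - 1, i.e. the remainder.\<close>
definition varphi :: "('k::field \<Rightarrow> 'e::field) \<Rightarrow> 'e \<Rightarrow> nat \<Rightarrow> nat \<Rightarrow> nat \<Rightarrow> 'k poly \<Rightarrow> 'k poly" where
  "varphi emb \<theta> n t sinv a = subst_poly emb \<theta> t sinv a mod (monom 1 n - 1)"

end

theory Submission
  imports Defs
begin


lemma fermat_fin:
  fixes c :: "'k::{field,finite}"
  shows "c ^ (card (UNIV::'k set)) = c"
proof (cases "c = 0")
  case True
  then show ?thesis by (simp add: zero_power card_gt_0_iff)
next
  case False
  define U where "U = (UNIV::'k set) - {0}"
  have fin: "finite U" by (simp add: U_def)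
  have bij: "bij_betw ((*) c) U U"
    unfolding bij_betw_def inj_on_def U_def using False
    apply (auto simp: image_def)
    subgoal for x by (rule bexI[of _ "inverse c * x"]) auto
    done
  have "prod id U = prod (\<lambda>x. c * x) U"
    using prod.reindex_bij_betw[OF bij, of id] by simp
  also have "\<dots> = c ^ card U * prod id U"
    by (simp add: prod.distrib)
  finally have "c ^ card U = 1"
    using fin by (simp add: U_def)
  moreover have "card U = (card (UNIV::'k set)) - 1" by (simp add: U_def card_Diff_subset)
  moreover have "(card (UNIV::'k set)) > 0" by (simp add: card_gt_0_iff)
  ultimately show ?thesis
    by (metis Suc_diff_1 mult.right_neutral power_Suc)
qed

lemma frob_add:
  fixes a b :: "'a::comm_ring_1"
  assumes H: "\<And>j. 0 < j \<Longrightarrow> j < q \<Longrightarrow> of_nat (q choose j) = (0::'a)" and q: "q > 0"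
  shows "(a + b) ^ q = a ^ q + b ^ q"
proof -
  have "(a + b) ^ q = (\<Sum>k\<le>q. of_nat (q choose k) * a^k * b^(q-k))"
    by (rule binomial_ring)
  also have "\<dots> = (\<Sum>k\<in>{0,q}. of_nat (q choose k) * a^k * b^(q-k))"
    by (rule sum.mono_neutral_right) (auto simp: H)
  also have "\<dots> = a ^ q + b ^ q" using q by simp
  finally show ?thesis .
qed

lemma frob_neg:
  fixes a :: "'a::comm_ring_1"
  assumes H: "\<And>j. 0 < j \<Longrightarrow> j < q \<Longrightarrow> of_nat (q choose j) = (0::'a)" and q: "q > 0"
  shows "(- a) ^ q = - (a ^ q)"
proof -
  have "(a + - a) ^ q = a ^ q + (-a) ^ q" by (rule frob_add[OF H q])
  then show ?thesis using q by (simp add: zero_power eq_neg_iff_add_eq_0 add.commute)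
qed

lemma frob_sum:
  fixes f :: "'b \<Rightarrow> 'a::comm_ring_1"
  assumes H: "\<And>j. 0 < j \<Longrightarrow> j < q \<Longrightarrow> of_nat (q choose j) = (0::'a)" and q: "q > 0"
  shows "(sum f A) ^ q = (\<Sum>x\<in>A. f x ^ q)"
proof (induction A rule: infinite_finite_induct)
  case (infinite A) then show ?case using q by (simp add: zero_power card_gt_0_iff)
next
  case empty then show ?case using q by (simp add: zero_power card_gt_0_iff)
next
  case (insert x F) then show ?case by (simp add: frob_add[OF H q])
qed

lemma binom_zero_fin:
  assumes "0 < j" "j < (card (UNIV::'k set))"
  shows "of_nat ((card (UNIV::'k set)) choose j) = (0::'k::{field,finite})"
proof -
  define q where "q = (card (UNIV::'k set))"
  define p :: "'k poly" where "p = (\<Sum>j\<in>{1..<q}. monom (of_nat (q choose j)) j)"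
  have q0: "q > 0" by (simp add: q_def card_gt_0_iff)
  have ev: "poly p x = 0" for x
  proof -
    have "(x + 1) ^ q = (\<Sum>k\<le>q. of_nat (q choose k) * x^k * 1^(q-k))"
      by (rule binomial_ring)
    also have "\<dots> = (\<Sum>k\<in>insert 0 (insert q {1..<q}). of_nat (q choose k) * x^k)"
      by (intro sum.cong) auto
    also have "\<dots> = 1 + x ^ q + poly p x"
      using q0 by (simp add: p_def poly_sum poly_monom)
    finally have "(x + 1) ^ q = 1 + x ^ q + poly p x" .
    moreover have "(x + 1) ^ q = x + 1" "x ^ q = x" using fermat_fin unfolding q_def by auto
    ultimately show ?thesis by simp
  qed
  have "p = 0"
  proof (rule ccontr)
    assume "p \<noteq> 0"
    then have "card {x. poly p x = 0} \<le> degree p" by (rule card_poly_roots_bound)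
    moreover have "degree p < q"
    proof -
      have "coeff p k = 0" if "k > q - 1" for k
        using that by (auto simp: p_def coeff_sum coeff_monom)
      then have "degree p \<le> q - 1" by (simp add: degree_le)
      then show ?thesis using q0 by linarith
    qed
    ultimately show False using ev by (simp add: q_def)
  qed
  then have "coeff p j = 0" by simp
  moreover have "coeff p j = of_nat (q choose j)"
    using assms unfolding q_def[symmetric]
    by (simp add: p_def coeff_sum coeff_monom sum.delta)
  ultimately show ?thesis by (simp add: q_def)
qed

lemma prod_linear_dvd:
  fixes a :: "'b \<Rightarrow> 'e::field"
  assumes "finite J" "inj_on a J" "\<forall>j\<in>J. poly p (a j) = 0"
  shows "(\<Prod>j\<in>J. [:- a j, 1:]) dvd p"
  using assms
proof (induction J arbitrary: p rule: finite_induct)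
  case empty then show ?case by simp
next
  case (insert x F)
  have "poly p (a x) = 0" using insert by simp
  then obtain p' where p: "p = [:- a x, 1:] * p'" using poly_eq_0_iff_dvd by blast
  have "\<forall>j\<in>F. poly p' (a j) = 0"
  proof
    fix j assume j: "j \<in> F"
    then have "a j \<noteq> a x" using insert(2,4) unfolding inj_on_def by blast
    moreover have "poly p (a j) = 0" using insert j by simp
    ultimately show "poly p' (a j) = 0" using p by simp
  qed
  then have "(\<Prod>j\<in>F. [:- a j, 1:]) dvd p'" using insert by (intro insert.IH) auto
  then have "[:- a x, 1:] * (\<Prod>j\<in>F. [:- a j, 1:]) dvd p" unfolding p by (rule mult_dvd_mono[OF dvd_refl])
  then show ?case using insert(1,2) by (simp only: prod.insert[OF insert(1,2)])
qed

lemma dvd_prod_linear: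
  fixes a :: "'b \<Rightarrow> 'e::field"
  assumes "finite J" "inj_on a J" "G dvd (\<Prod>j\<in>J. [:- a j, 1:])"
  shows "G = smult (lead_coeff G) (\<Prod>j\<in>{j\<in>J. poly G (a j) = 0}. [:- a j, 1:])"
  using assms
proof (induction J arbitrary: G rule: finite_induct)
  case empty
  then have "is_unit G" by simp
  then obtain c where "G = [:c:]" by (metis is_unit_iff_degree is_unit_iff_degree degree_eq_zeroE is_unit_poly_iff)
  then show ?case by simp
next
  case (insert x F)
  have ax: "a j \<noteq> a x" if "j \<in> F" for j
    using insert(2,4) that unfolding inj_on_def by blast
  have injF: "inj_on a F" using insert by auto
  have ne: "[:- a x, 1:] \<noteq> 0" by simp
  show ?case
  proof (cases "poly G (a x) = 0")
    case True
    then obtain G' where G: "G = [:- a x, 1:] * G'" using poly_eq_0_iff_dvd by blast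
    have "[:- a x, 1:] * G' dvd [:- a x, 1:] * (\<Prod>j\<in>F. [:- a j, 1:])"
      using insert(5) insert(1,2) G by (simp only: prod.insert[OF insert(1,2)])
    then have "G' dvd (\<Prod>j\<in>F. [:- a j, 1:])"
      using ne by (metis dvd_mult_cancel_left)
    then have IH: "G' = smult (lead_coeff G') (\<Prod>j\<in>{j\<in>F. poly G' (a j) = 0}. [:- a j, 1:])"
      using insert.IH injF by blast
    have R: "{j\<in>insert x F. poly G (a j) = 0} = insert x {j\<in>F. poly G' (a j) = 0}"
      using True G ax by auto
    have "G = [:- a x, 1:] * smult (lead_coeff G') (\<Prod>j\<in>{j\<in>F. poly G' (a j) = 0}. [:- a j, 1:])"
      using G IH by simp
    also have "\<dots> = smult (lead_coeff G) (\<Prod>j\<in>{j\<in>insert x F. poly G (a j) = 0}. [:- a j, 1:])"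
    proof -
      have lc: "lead_coeff G = lead_coeff G'" unfolding G lead_coeff_mult by simp
      have pr: "(\<Prod>j\<in>insert x {j\<in>F. poly G' (a j) = 0}. [:- a j, 1:])
          = [:- a x, 1:] * (\<Prod>j\<in>{j\<in>F. poly G' (a j) = 0}. [:- a j, 1:])"
        by (rule prod.insert) (use insert(1,2) in auto)
      show ?thesis unfolding R pr lc by (simp only: mult_smult_right)
    qed
    finally show ?thesis .
  next
    case False
    from insert(5) obtain w where w: "[:- a x, 1:] * (\<Prod>j\<in>F. [:- a j, 1:]) = G * w"
      using insert(1,2) by (auto elim: dvdE)
    have "poly (G * w) (a x) = 0" using w[symmetric] by simp
    then have "poly w (a x) = 0" using False by simp
    then obtain w' where w': "w = [:- a x, 1:] * w'" using poly_eq_0_iff_dvd by blast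
    have "(\<Prod>j\<in>F. [:- a j, 1:]) = G * w'" using w w' ne
      by (metis mult.left_commute mult_left_cancel)
    then have "G dvd (\<Prod>j\<in>F. [:- a j, 1:])" by simp
    then have IH: "G = smult (lead_coeff G) (\<Prod>j\<in>{j\<in>F. poly G (a j) = 0}. [:- a j, 1:])"
      using insert.IH injF by blast
    have "{j\<in>insert x F. poly G (a j) = 0} = {j\<in>F. poly G (a j) = 0}" using False by auto
    then show ?thesis using IH by simp
  qed
qed

locale emb_hom =
  fixes emb :: "'k::field \<Rightarrow> 'e::field"
  assumes one: "emb 1 = 1" and add: "\<And>x y. emb (x + y) = emb x + emb y"
    and mult: "\<And>x y. emb (x * y) = emb x * emb y"
begin

lemma zero[simp]: "emb 0 = 0"
proof -
  have "emb 0 + emb 0 = emb 0 + 0" using add[of 0 0] by simp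
  then show ?thesis by (rule add_left_imp_eq)
qed

lemma neg[simp]: "emb (- x) = - emb x"
  using add[of x "-x"] by (simp add: eq_neg_iff_add_eq_0 add.commute)

lemma diff[simp]: "emb (x - y) = emb x - emb y"
  using add[of x "-y"] by simp

lemma sum_hom: "emb (sum f A) = (\<Sum>x\<in>A. emb (f x))"
  by (induction A rule: infinite_finite_induct) (auto simp: add)

lemma prod_hom: "emb (prod f A) = (\<Prod>x\<in>A. emb (f x))"
  by (induction A rule: infinite_finite_induct) (auto simp: mult one)

lemma power_hom[simp]: "emb (x ^ m) = emb x ^ m"
  by (induction m) (auto simp: mult one)

lemma of_nat_hom[simp]: "emb (of_nat m) = of_nat m"
  by (induction m) (auto simp: add one)

lemma eq0_iff[simp]: "emb x = 0 \<longleftrightarrow> x = 0"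
proof
  assume h: "emb x = 0"
  show "x = 0"
  proof (rule ccontr)
    assume "x \<noteq> 0"
    then have "emb x * emb (inverse x) = 1" by (simp flip: mult add: one)
    then show False using h by simp
  qed
qed simp

lemma inj_emb: "inj emb"
  by (rule injI) (metis diff eq0_iff eq_iff_diff_eq_0)

lemma inverse_hom[simp]: "emb (inverse x) = inverse (emb x)"
proof (cases "x = 0")
  case False
  then have "emb x * emb (inverse x) = 1" by (simp flip: mult add: one)
  then show ?thesis by (metis inverse_unique)
qed simp

abbreviation E where "E \<equiv> map_poly emb"

lemma coeff_E[simp]: "coeff (E p) k = emb (coeff p k)"
  by (simp add: coeff_map_poly)

lemma E_add: "E (p + q) = E p + E q"
  by (rule poly_eqI) (simp add: add)

lemma E_mult: "E (p * q) = E p * E q"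
  by (rule poly_eqI) (simp add: coeff_mult sum_hom mult)

lemma E_one[simp]: "E 1 = 1"
  by (simp add: one)

lemma E_prod: "E (prod f A) = (\<Prod>x\<in>A. E (f x))"
  by (induction A rule: infinite_finite_induct) (auto simp: E_mult)

lemma E_power: "E (p ^ m) = E p ^ m"
  by (induction m) (auto simp: E_mult)

lemma E_pCons: "E (pCons c p) = pCons (emb c) (E p)"
  by (rule poly_eqI) (simp add: coeff_pCons split: nat.split)

lemma E_const[simp]: "E [:c:] = [:emb c:]"
  by (simp add: E_pCons)

lemma E_monom: "E (monom c m) = monom (emb c) m"
  by (simp add: map_poly_monom)

lemma E_diff: "E (p - q) = E p - E q"
  by (rule poly_eqI) simp

lemma E_pcompose: "E (pcompose p r) = pcompose (E p) (E r)"
  by (induction p rule: pCons_induct) (auto simp: pcompose_pCons E_add E_mult E_pCons)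

lemma E_inj: "E p = E r \<Longrightarrow> p = r"
  by (rule poly_eqI) (metis coeff_E inj_emb injD)

lemma degree_E[simp]: "degree (E p) = degree p"
  by (rule degree_map_poly) simp

lemma E_dvd: "p dvd r \<Longrightarrow> E p dvd E r"
  by (auto elim!: dvdE simp: E_mult)

lemma pullback_elem_emb[simp]: "pullback_elem emb (emb c) = c"
  unfolding pullback_elem_def by (rule the_equality) (auto dest: injD[OF inj_emb])

lemma pullback_poly_ok:
  assumes "\<And>k. coeff G k \<in> range emb"
  shows "E (pullback_poly emb G) = G"
proof -
  define h where "h = map_poly (pullback_elem emb) G"
  have p0: "pullback_elem emb 0 = 0" using pullback_elem_emb[of 0] by simp
  have Eh: "E h = G"
  proof (rule poly_eqI)
    fix k
    obtain c where c: "coeff G k = emb c" using assms[of k] by auto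
    show "coeff (E h) k = coeff G k"
      by (simp add: h_def coeff_map_poly p0 c)
  qed
  have "pullback_poly emb G = h"
    unfolding pullback_poly_def by (rule the_equality) (use Eh E_inj in auto)
  then show ?thesis using Eh by simp
qed

end


lemma pcompose_X_power: "pcompose ([:0, 1:] ^ i) r = r ^ i"
proof (induction i)
  case (Suc i)
  have "pcompose ([:0, 1:] ^ Suc i) r = pcompose [:0, 1:] r * pcompose ([:0, 1:] ^ i) r"
    by (simp only: power_Suc pcompose_mult)
  then show ?case using Suc by (simp add: pcompose_pCons)
qed (simp add: pcompose_1)

lemma pcompose_monom_gen: "pcompose (monom c i) r = smult c (r ^ i)"
  by (simp add: monom_altdef pcompose_smult pcompose_X_power)

lemma power_mod_root:
  fixes \<theta> :: "'a::comm_monoid_mult"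
  assumes "\<theta> ^ n = 1"
  shows "\<theta> ^ (m mod n) = \<theta> ^ m"
proof -
  have "\<theta> ^ m = \<theta> ^ (n * (m div n) + m mod n)" by (metis div_mult_mod_eq mult.commute)
  also have "\<theta> ^ (n * (m div n) + m mod n) = \<theta> ^ (m mod n)"
    by (simp only: power_add power_mult assms power_one mult_1)
  finally show ?thesis by (rule sym)
qed

lemma frob_coeff:
  fixes G :: "'a::comm_ring_1 poly"
  assumes H: "\<And>j. 0 < j \<Longrightarrow> j < q \<Longrightarrow> of_nat (q choose j) = (0::'a poly)" and q: "q > 0"
    and eq: "G ^ q = pcompose G (monom 1 q)"
  shows "coeff G k ^ q = coeff G k"
proof -
  have s1: "G ^ q = (\<Sum>i\<le>degree G. monom (coeff G i ^ q) (i * q))"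
  proof -
    have "G ^ q = (\<Sum>i\<le>degree G. monom (coeff G i) i) ^ q" by (simp add: poly_as_sum_of_monoms)
    also have "\<dots> = (\<Sum>i\<le>degree G. monom (coeff G i) i ^ q)" by (rule frob_sum[OF H q])
    finally show ?thesis by (simp add: monom_power)
  qed
  have s2: "pcompose G (monom 1 q) = (\<Sum>i\<le>degree G. monom (coeff G i) (i * q))"
  proof -
    have "pcompose G (monom 1 q) = pcompose (\<Sum>i\<le>degree G. monom (coeff G i) i) (monom 1 q)"
      by (simp add: poly_as_sum_of_monoms)
    also have "\<dots> = (\<Sum>i\<le>degree G. monom (coeff G i) (i * q))"
      by (simp add: pcompose_sum pcompose_monom_gen monom_power smult_monom mult.commute)
    finally show ?thesis .
  qed
  have c1: "coeff (G ^ q) (k * q) = coeff G k ^ q"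
  proof -
    have "coeff (G ^ q) (k * q) = (\<Sum>i\<le>degree G. if i = k then coeff G i ^ q else 0)"
      unfolding s1 coeff_sum coeff_monom using q by (intro sum.cong) auto
    also have "\<dots> = coeff G k ^ q" using q by (auto simp: coeff_eq_0 zero_power)
    finally show ?thesis .
  qed
  have c2: "coeff (pcompose G (monom 1 q)) (k * q) = coeff G k"
  proof -
    have "coeff (pcompose G (monom 1 q)) (k * q) = (\<Sum>i\<le>degree G. if i = k then coeff G i else 0)"
      unfolding s2 coeff_sum coeff_monom using q by (intro sum.cong) auto
    also have "\<dots> = coeff G k" by (auto simp: coeff_eq_0)
    finally show ?thesis .
  qed
  show ?thesis using c1 c2 eq by simp
qed


locale emb_fin = emb_hom emb for emb :: "'k::{field,finite} \<Rightarrow> 'e::field"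
begin


lemma qq_pos: "(card (UNIV::'k set)) > 0" by (simp add: card_gt_0_iff)

lemma qq_ge2: "(card (UNIV::'k set)) \<ge> 2"
proof -
  have "card {0, 1::'k} \<le> (card (UNIV::'k set))" by (rule card_mono) auto
  then show ?thesis by simp
qed

lemma binom_e: "0 < j \<Longrightarrow> j < (card (UNIV::'k set)) \<Longrightarrow> of_nat ((card (UNIV::'k set)) choose j) = (0::'e)"
  by (metis binom_zero_fin of_nat_hom zero)

lemma binom_ep: "0 < j \<Longrightarrow> j < (card (UNIV::'k set)) \<Longrightarrow> of_nat ((card (UNIV::'k set)) choose j) = (0::'e poly)"
  by (simp add: of_nat_poly binom_e)

lemma fixed_range:
  assumes "c ^ (card (UNIV::'k set)) = c"
  shows "c \<in> range emb"
proof -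
  define T :: "'e poly" where "T = monom 1 (card (UNIV::'k set)) - [:0, 1:]"
  have pT: "poly T x = x ^ (card (UNIV::'k set)) - x" for x by (simp add: T_def poly_monom)
  have T0: "T \<noteq> 0"
  proof
    assume "T = 0"
    then have "coeff T (card (UNIV::'k set)) = 0" by simp
    then show False using qq_ge2 by (simp add: T_def coeff_pCons split: nat.splits)
  qed
  have dT: "degree T \<le> (card (UNIV::'k set))"
  proof -
    have "coeff T k = 0" if "k > (card (UNIV::'k set))" for k using that qq_ge2
      by (simp add: T_def coeff_pCons split: nat.splits)
    then show ?thesis by (simp add: degree_le)
  qed
  define R where "R = {x. poly T x = 0}"
  have finR: "finite R" unfolding R_def using T0 by (rule poly_roots_finite)
  have cR: "card R \<le> (card (UNIV::'k set))" unfolding R_def using card_poly_roots_bound[OF T0] dT by linarith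
  have sub: "range emb \<subseteq> R"
  proof
    fix y assume "y \<in> range emb"
    then obtain c where y: "y = emb c" by auto
    have "emb (c ^ (card (UNIV::'k set))) = emb c" using fermat_fin[of c] by simp
    then show "y \<in> R" by (simp add: R_def pT y)
  qed
  have "card (range emb) = (card (UNIV::'k set))" using inj_emb by (simp add: card_image)
  then have "range emb = R" using card_subset_eq[OF finR sub] cR
    by (metis card_mono finR le_antisym sub)
  then show ?thesis using assms by (simp add: R_def pT)
qed

lemma stepA:
  assumes th: "\<theta> ^ n = 1" and Q: "Q \<subseteq> {..<n}" and inv: "(\<lambda>i. (card (UNIV::'k set)) * i mod n) ` Q = Q"
  shows "E (fP emb \<theta> Q) = (\<Prod>i\<in>Q. [:- (\<theta> ^ i), 1:])"
proof -
  define G where "G = (\<Prod>i\<in>Q. [:- (\<theta> ^ i), 1:])"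
  define m where "m = (\<lambda>i. (card (UNIV::'k set)) * i mod n)"
  have finQ: "finite Q" using Q finite_subset by blast
  have injm: "inj_on m Q" using finQ inv unfolding m_def by (intro eq_card_imp_inj_on) auto
  have lin: "[:- a, 1:] ^ (card (UNIV::'k set)) = monom 1 (card (UNIV::'k set)) + [:- (a ^ (card (UNIV::'k set))):]" for a :: 'e
  proof -
    have "[:- a, 1:] = monom 1 1 + [:- a:]" by (simp add: monom_Suc)
    then have "[:- a, 1:] ^ (card (UNIV::'k set)) = monom 1 1 ^ (card (UNIV::'k set)) + [:- a:] ^ (card (UNIV::'k set))"
      using frob_add[OF binom_ep qq_pos] by simp
    also have "\<dots> = monom 1 (card (UNIV::'k set)) + [:- (a ^ (card (UNIV::'k set))):]"
      by (simp add: monom_power poly_const_pow frob_neg[OF binom_e qq_pos])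
    finally show ?thesis .
  qed
  have eq: "G ^ (card (UNIV::'k set)) = pcompose G (monom 1 (card (UNIV::'k set)))"
  proof -
    have "G ^ (card (UNIV::'k set)) = (\<Prod>i\<in>Q. monom 1 (card (UNIV::'k set)) + [:- (\<theta> ^ m i):])"
      unfolding G_def prod_power_distrib lin
      by (intro prod.cong refl) (simp add: m_def power_mod_root[OF th] flip: power_mult mult.commute)
    also have "\<dots> = (\<Prod>i\<in>m ` Q. monom 1 (card (UNIV::'k set)) + [:- (\<theta> ^ i):])"
      using prod.reindex[OF injm, of "\<lambda>i. monom 1 (card (UNIV::'k set)) + [:- (\<theta> ^ i):]"] by (simp add: comp_def)
    also have "\<dots> = (\<Prod>i\<in>Q. monom 1 (card (UNIV::'k set)) + [:- (\<theta> ^ i):])"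
      using inv by (simp add: m_def)
    also have "\<dots> = pcompose G (monom 1 (card (UNIV::'k set)))"
      unfolding G_def pcompose_prod by (intro prod.cong refl) (simp add: pcompose_pCons)
    finally show ?thesis .
  qed
  have "coeff G k ^ (card (UNIV::'k set)) = coeff G k" for k
    by (rule frob_coeff[OF binom_ep qq_pos eq])
  then have "coeff G k \<in> range emb" for k by (rule fixed_range)
  then have "E (pullback_poly emb G) = G" by (rule pullback_poly_ok)
  then show ?thesis by (simp add: fP_def G_def)
qed

end



lemma lc_gcd:
  assumes "gcd (a::'k::field_gcd poly) b \<noteq> 0"
  shows "lead_coeff (gcd a b) = 1"
proof -
  have "unit_factor (gcd a b) = 1" using assms by (auto simp: unit_factor_gcd)
  then have "[:unit_factor (lead_coeff (gcd a b)):] = 1" by (simp add: unit_factor_poly_def)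
  then have u: "unit_factor (lead_coeff (gcd a b)) = 1" by (metis one_pCons pCons_eq_iff)
  have "lead_coeff (gcd a b) \<noteq> 0" using assms by simp
  then have "is_unit (lead_coeff (gcd a b))" by (simp add: dvd_field_iff)
  then have "normalize (lead_coeff (gcd a b)) = 1" by (rule is_unit_normalize)
  then show ?thesis using unit_factor_mult_normalize[of "lead_coeff (gcd a b)"] u by simp
qed

lemma th_inj_lt:
  fixes \<theta> :: "'e::field"
  assumes prim: "\<theta> ^ n = 1" "\<And>k. 0 < k \<Longrightarrow> k < n \<Longrightarrow> \<theta> ^ k \<noteq> 1"
    and "i < j" "j < n" "\<theta> ^ i = \<theta> ^ j"
  shows False
proof -
  have n0: "n > 0" using assms by simp
  have "\<theta> \<noteq> 0" using prim(1) n0 by (metis zero_power one_neq_zero)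
  have "\<theta> ^ j = \<theta> ^ i * \<theta> ^ (j - i)" using assms(3) by (simp flip: power_add)
  then have "\<theta> ^ (j - i) = 1" using assms(5) \<open>\<theta> \<noteq> 0\<close> by simp
  then show False using prim(2)[of "j - i"] assms by simp
qed

lemma th_inj:
  fixes \<theta> :: "'e::field"
  assumes prim: "\<theta> ^ n = 1" "\<And>k. 0 < k \<Longrightarrow> k < n \<Longrightarrow> \<theta> ^ k \<noteq> 1"
    and "i < n" "j < n" "\<theta> ^ i = \<theta> ^ j"
  shows "i = j"
  using th_inj_lt[OF prim, of i j] th_inj_lt[OF prim, of j i] assms
  by (metis linorder_neqE_nat)

lemma th_eq_iff:
  fixes \<theta> :: "'e::field"
  assumes prim: "\<theta> ^ n = 1" "\<And>k. 0 < k \<Longrightarrow> k < n \<Longrightarrow> \<theta> ^ k \<noteq> 1" and n: "n > 0"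
  shows "\<theta> ^ a = \<theta> ^ b \<longleftrightarrow> a mod n = b mod n"
proof
  assume "\<theta> ^ a = \<theta> ^ b"
  then have "\<theta> ^ (a mod n) = \<theta> ^ (b mod n)" by (simp add: power_mod_root[OF prim(1)])
  then show "a mod n = b mod n" using th_inj[OF prim] n by simp
next
  assume "a mod n = b mod n"
  then show "\<theta> ^ a = \<theta> ^ b" by (metis power_mod_root[OF prim(1)])
qed

lemma Xn_split:
  fixes \<theta> :: "'e::field"
  assumes prim: "\<theta> ^ n = 1" "\<And>k. 0 < k \<Longrightarrow> k < n \<Longrightarrow> \<theta> ^ k \<noteq> 1" and n: "n > 0"
  shows "monom 1 n - 1 = (\<Prod>j<n. [:- (\<theta> ^ j), 1:])"
proof -
  define N :: "'e poly" where "N = monom 1 n - 1"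
  define Pr where "Pr = (\<Prod>j<n. [:- (\<theta> ^ j), 1:])"
  have inj: "inj_on (\<lambda>j. \<theta> ^ j) {..<n}" by (rule inj_onI) (use th_inj[OF prim] in auto)
  have "Pr dvd N" unfolding Pr_def
    by (rule prod_linear_dvd[OF _ inj])
      (auto simp: N_def poly_monom, metis mult.commute power_mult power_one prim(1))
  then obtain r where r: "N = Pr * r" by (auto elim: dvdE)
  have cN: "coeff N k = 0" if "k > n" for k using that n by (simp add: N_def coeff_monom)
  have cNn: "coeff N n = 1" using n by (simp add: N_def coeff_monom)
  have dN: "degree N = n"
    using cN cNn by (metis degree_le le_antisym le_degree one_neq_zero)
  have N0: "N \<noteq> 0" using cNn by auto
  have lN: "lead_coeff N = 1" using dN cNn by simp
  have dP: "degree Pr = n" unfolding Pr_def by (subst degree_prod_eq_sum_degree) auto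
  have lP: "lead_coeff Pr = 1" unfolding Pr_def by (simp add: lead_coeff_prod)
  have r0: "r \<noteq> 0" using N0 r by auto
  have Pr0: "Pr \<noteq> 0" using N0 r by auto
  have "degree r = 0" using degree_mult_eq[OF Pr0 r0] r dN dP by simp
  moreover have "lead_coeff r = 1" using lead_coeff_mult[of Pr r] r lN lP by simp
  ultimately have "r = 1" by (metis degree_0_id one_pCons)
  then show ?thesis using r by (simp add: N_def Pr_def)
qed



theorem theorem2p8:
  fixes emb :: "'k::{field_gcd,finite} \<Rightarrow> 'e::field"
    and \<theta> :: 'e and q n s t sinv :: nat and P :: "nat set"
  assumes q_def: "q = card (UNIV :: 'k set)"
    and emb_one: "emb 1 = 1"
    and emb_add: "\<And>x y. emb (x + y) = emb x + emb y"
    and emb_mult: "\<And>x y. emb (x * y) = emb x * emb y"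
    and n_pos: "n > 0"
    and coprime_qn: "coprime q n"
    and prim: "\<theta> ^ n = 1" "\<And>k. 0 < k \<Longrightarrow> k < n \<Longrightarrow> \<theta> ^ k \<noteq> 1"
    and s: "s < n" "coprime s n"
    and t: "t < n" "[q * t = t] (mod n)"
    and sinv: "sinv > 0" "[s * sinv = 1] (mod n)"
    and P: "mu_invariant q n P"
  shows "fP emb \<theta> (rho n s t ` P) = gcd (subst_poly emb \<theta> t sinv (fP emb \<theta> P)) (monom 1 n - 1)
       \<and> gcd (subst_poly emb \<theta> t sinv (fP emb \<theta> P)) (monom 1 n - 1)
         = gcd (varphi emb \<theta> n t sinv (fP emb \<theta> P)) (monom 1 n - 1)"
proof -
  interpret emb_fin emb by unfold_locales (fact emb_one emb_add emb_mult)+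
  have sinv1: "(s * sinv) mod n = 1 mod n" using sinv(2) unfolding cong_def .
  have th0: "\<theta> \<noteq> 0" using prim(1) n_pos by (metis zero_power one_neq_zero)
  have Psub: "P \<subseteq> {..<n}" and Pinv: "(\<lambda>i. q * i mod n) ` P = P"
    using P unfolding mu_invariant_def mu_def by auto
  have finP: "finite P" using Psub finite_subset by blast
  define RP where "RP = rho n s t ` P"
  have RPsub: "RP \<subseteq> {..<n}" using n_pos by (auto simp: RP_def rho_def)
  have tq: "(s * (q * t)) mod n = (s * t) mod n"
    using t(2) unfolding cong_def by (metis mod_mult_right_eq)
  have comm: "q * (rho n s t i) mod n = rho n s t (q * i mod n)" for i
  proof -
    have "q * (rho n s t i) mod n = (s * (q * i) + s * (q * t)) mod n"
      by (simp add: rho_def mod_mult_right_eq algebra_simps)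
    also have "\<dots> = (s * (q * i) + s * t) mod n"
      using tq by (metis mod_add_right_eq)
    also have "\<dots> = rho n s t (q * i mod n)"
    proof -
      have "(s * (q * i mod n + t)) mod n = (s * (q * i mod n) + s * t) mod n" by (simp only: distrib_left)
      also have "\<dots> = ((s * (q * i mod n)) mod n + s * t) mod n" by (simp only: mod_add_left_eq)
      also have "\<dots> = ((s * (q * i)) mod n + s * t) mod n" by (simp only: mod_mult_right_eq)
      also have "\<dots> = (s * (q * i) + s * t) mod n" by (simp only: mod_add_left_eq)
      finally show ?thesis unfolding rho_def by (rule sym)
    qed
    finally show ?thesis .
  qed
  have RPinv: "(\<lambda>i. q * i mod n) ` RP = RP"
  proof -
    have "(\<lambda>i. q * i mod n) ` RP = rho n s t ` (\<lambda>i. q * i mod n) ` P"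
      unfolding RP_def image_image comm ..
    then show ?thesis using Pinv by (simp add: RP_def)
  qed
  have EA: "E (fP emb \<theta> P) = (\<Prod>i\<in>P. [:- (\<theta> ^ i), 1:])"
    using stepA[OF prim(1) Psub] Pinv q_def by simp
  have ERP: "E (fP emb \<theta> RP) = (\<Prod>i\<in>RP. [:- (\<theta> ^ i), 1:])"
    using stepA[OF prim(1) RPsub] RPinv q_def by simp
  have thq: "\<theta> ^ (t * q) = \<theta> ^ t"
    using t(2) th_eq_iff[OF prim n_pos] unfolding cong_def by (simp add: mult.commute)
  have "(inverse \<theta> ^ t) ^ q = inverse \<theta> ^ t"
    by (simp only: power_mult[symmetric] power_inverse thq)
  then obtain c where c: "emb c = inverse \<theta> ^ t" using fixed_range q_def by fastforce
  have pbc: "pullback_elem emb (inverse \<theta> ^ t) = c" using c pullback_elem_emb by metis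
  define S where "S = subst_poly emb \<theta> t sinv (fP emb \<theta> P)"
  define N :: "'k poly" where "N = monom 1 n - 1"
  have ES: "E S = pcompose (\<Prod>i\<in>P. [:- (\<theta> ^ i), 1:]) (monom (inverse \<theta> ^ t) sinv)"
    unfolding S_def subst_poly_def pbc E_pcompose E_monom EA c ..
  have EN: "E N = (\<Prod>j<n. [:- (\<theta> ^ j), 1:])"
    unfolding N_def E_diff E_monom using Xn_split[OF prim n_pos] by (simp add: one)
  have "coeff N n = 1" using n_pos by (simp add: N_def coeff_monom)
  then have N0: "N \<noteq> 0" by auto
  define g where "g = gcd S N"
  have g0: "g \<noteq> 0" using N0 by (simp add: g_def)
  have lg: "lead_coeff (E g) = 1" using lc_gcd[of S N] g0 by (simp add: g_def lead_coeff_map_poly_nz one)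
  have bez: "g = fst (bezout_coefficients S N) * S + snd (bezout_coefficients S N) * N"
    unfolding g_def by (rule bezout_coefficients_fst_snd[symmetric])
  have gS: "E g dvd E S" by (rule E_dvd) (simp add: g_def)
  have gN: "E g dvd (\<Prod>j<n. [:- (\<theta> ^ j), 1:])" using E_dvd[of g N] EN by (simp add: g_def)
  have inj: "inj_on (\<lambda>j. \<theta> ^ j) {..<n}" by (rule inj_onI) (use th_inj[OF prim] in auto)
  have Eg: "E g = smult 1 (\<Prod>j\<in>{j\<in>{..<n}. poly (E g) (\<theta> ^ j) = 0}. [:- (\<theta> ^ j), 1:])"
    using dvd_prod_linear[OF finite_lessThan inj gN] lg by simp
  have rootN: "poly (E N) (\<theta> ^ j) = 0" if "j < n" for j
    using that by (auto simp: EN poly_prod)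
  have root_iff: "poly (E g) (\<theta> ^ j) = 0 \<longleftrightarrow> poly (E S) (\<theta> ^ j) = 0" if "j < n" for j
  proof
    assume "poly (E g) (\<theta> ^ j) = 0"
    then show "poly (E S) (\<theta> ^ j) = 0" using gS by (auto elim!: dvdE)
  next
    assume "poly (E S) (\<theta> ^ j) = 0"
    then show "poly (E g) (\<theta> ^ j) = 0"
      using rootN[OF that] by (subst bez) (simp add: E_add E_mult)
  qed
  have ES_iff: "poly (E S) (\<theta> ^ j) = 0 \<longleftrightarrow> j \<in> RP" if "j < n" for j
  proof -
    have "poly (E S) (\<theta> ^ j) = 0 \<longleftrightarrow> (\<exists>i\<in>P. inverse \<theta> ^ t * \<theta> ^ (j * sinv) = \<theta> ^ i)"
      using finP by (simp add: ES poly_pcompose poly_prod poly_monom power_mult)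
    also have "\<dots> \<longleftrightarrow> (\<exists>i\<in>P. (j * sinv) mod n = (i + t) mod n)"
    proof -
      have "inverse \<theta> ^ t * \<theta> ^ (j * sinv) = \<theta> ^ i \<longleftrightarrow> \<theta> ^ (j * sinv) = \<theta> ^ (i + t)" for i
        using th0 by (auto simp: power_add power_inverse field_simps)
      then show ?thesis using th_eq_iff[OF prim n_pos] by simp
    qed
    also have "\<dots> \<longleftrightarrow> j \<in> RP"
    proof
      assume "\<exists>i\<in>P. (j * sinv) mod n = (i + t) mod n"
      then obtain i where i: "i \<in> P" "(j * sinv) mod n = (i + t) mod n" by auto
      have h1: "s * (j * sinv) mod n = s * (i + t) mod n" using i(2) by (metis mod_mult_right_eq)
      have e1: "s * (j * sinv) = j * (s * sinv)" by (simp only: ac_simps)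
      have "j * (s * sinv) mod n = j * ((s * sinv) mod n) mod n" by (simp only: mod_mult_right_eq)
      also have "\<dots> = j * (1 mod n) mod n" using sinv1 by (simp only:)
      also have "\<dots> = j mod n" by (simp only: mod_mult_right_eq mult_1_right)
      also have "\<dots> = j" using that by simp
      finally have "s * (j * sinv) mod n = j" unfolding e1 .
      then show "j \<in> RP" using i h1 by (auto simp: RP_def rho_def)
    next
      assume "j \<in> RP"
      then obtain i where i: "i \<in> P" "j = s * (i + t) mod n" by (auto simp: RP_def rho_def)
      have "(j * sinv) mod n = (s * (i + t) * sinv) mod n" unfolding i(2) by (simp only: mod_mult_left_eq)
      also have "\<dots> = ((i + t) * (s * sinv)) mod n" by (simp only: ac_simps)
      also have "\<dots> = (i + t) * ((s * sinv) mod n) mod n" by (simp only: mod_mult_right_eq)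
      also have "\<dots> = (i + t) * (1 mod n) mod n" using sinv1 by (simp only:)
      also have "\<dots> = (i + t) mod n" by (simp only: mod_mult_right_eq mult_1_right)
      finally show "\<exists>i\<in>P. (j * sinv) mod n = (i + t) mod n" using i by auto
    qed
    finally show ?thesis .
  qed
  have "{j\<in>{..<n}. poly (E g) (\<theta> ^ j) = 0} = RP"
    using root_iff ES_iff RPsub by auto
  then have "E g = E (fP emb \<theta> RP)" using Eg ERP by simp
  then have "g = fP emb \<theta> RP" by (rule E_inj)
  moreover have "gcd (varphi emb \<theta> n t sinv (fP emb \<theta> P)) N = g"
    unfolding varphi_def g_def S_def N_def[symmetric] using N0 by simp
  ultimately show ?thesis by (simp add: g_def S_def N_def RP_def)
qed


end
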